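(* Let $F(\rho,\eta)$ be a smooth function on an open subset of the half-plane $\{\rho>0\}$ satisfying $F_{\rho\rho}+F_{\eta\eta}=\frac{3F}{4\rho^2}$ (i.e. $F$ is an eigenfunction with eigenvalue $3/4$ of the hyperbolic Laplacian $\rho^2(\partial_\rho^2+\partial_\eta^2)$), and let $\varphi$ be a twistor, i.e. $\varphi=c_0m_0+c_1m_1$ with $c_0=-(a\eta-b)/\sqrt\rho$, $c_1=a\sqrt\rho$ for some constants $a,b\in\mathbb{R}$. Define $$\Phi=\tfrac12F\,\flat\varphi+dF\cdot\varphi,$$ where $\flat\varphi=c_0\mu_0+c_1\mu_1$ and $dF\cdot\varphi=\rho F_\rho(c_0\mu_0-c_1\mu_1)+\rho F_\eta(c_1\mu_0+c_0\mu_1)$. Then $\Phi$ is a solution of the Joyce equation; explicitly, writing $\Phi=A_0\mu_0+A_1\mu_1$, i.e. $$A_0=(\tfrac12F+\rho F_\rho)c_0+\rho F_\eta c_1,\qquad A_1=\rho F_\eta c_0+(\tfrac12F-\rho F_\rho)c_1,$$ one has $(A_0)_\rho+(A_1)_\eta=A_0/\rho$ and $(A_0)_\eta-(A_1)_\rho=0$.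
   Context: Setting: the hyperbolic plane in half-space coordinates $(\rho>0,\eta)$ with metric $(d\rho^2+d\eta^2)/\rho^2$. Its spinor bundle $\mathcal W$ is a real rank-$2$ bundle with orthonormal frame $m_0,m_1$ and dual coframe $\mu_0,\mu_1$ of $\mathcal W^*$, where $T^*\mathcal H^2$ is identified with trace-free symmetric products via $\mu_0^2-\mu_1^2=d\rho/\rho$, $2\mu_0\mu_1=d\eta/\rho$; then $dF=\rho F_\rho(\mu_0^2-\mu_1^2)+2\rho F_\eta\mu_0\mu_1$, and $dF\cdot\varphi$ is the natural contraction $T^*\mathcal H^2\otimes\mathcal W\to\mathcal W^*$ (given explicitly in the claim), while $\flat$ is the metric isomorphism $\mathcal W\to\mathcal W^*$ sending $m_i\mapsto\mu_i$. Twistors are the sections of $\mathcal W$ of the stated form (the "constant" sections in the model $\mathcal W=\mathcal H^2\times\mathbb{R}^2$). The Joyce equation for a section $\Phi=A_0\mu_0+A_1\mu_1$ of $\mathcal W^*$ is the system $(A_0)_\rho+(A_1)_\eta=A_0/\rho$, $(A_0)_\eta-(A_1)_\rho=0$. *)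

theory Defs
  imports "HOL-Analysis.Analysis"
begin

definition half_plane :: "(real \<times> real) set" where
  "half_plane = {p. fst p > 0}"

definition d_rho :: "(real \<times> real \<Rightarrow> real) \<Rightarrow> real \<times> real \<Rightarrow> real" where
  "d_rho f p = deriv (\<lambda>t. f (t, snd p)) (fst p)"

definition d_eta :: "(real \<times> real \<Rightarrow> real) \<Rightarrow> real \<times> real \<Rightarrow> real" where
  "d_eta f p = deriv (\<lambda>t. f (fst p, t)) (snd p)"

text \<open>Smoothness (C-infinity) on a set U: f is (Frechet) differentiable at every point
  of U with partial derivatives f1, f2 which are again smooth on U.\<close>
coinductive smooth_on2 :: "(real \<times> real) set \<Rightarrow> (real \<times> real \<Rightarrow> real) \<Rightarrow> bool"
  for U where
  "\<lbrakk> \<forall>p\<in>U. (f has_derivative (\<lambda>h. fst h * f1 p + snd h * f2 p)) (at p);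
     smooth_on2 U f1; smooth_on2 U f2 \<rbrakk> \<Longrightarrow> smooth_on2 U f"

text \<open>Sections of W and W^* are given by their coefficient pairs w.r.t. the frames
  m0, m1 resp. mu0, mu1.\<close>
type_synonym sect = "real \<times> real \<Rightarrow> real \<times> real"

definition twistor :: "real \<Rightarrow> real \<Rightarrow> sect" where
  "twistor a b p = (- (a * snd p - b) / sqrt (fst p), a * sqrt (fst p))"

text \<open>The metric isomorphism flat : W \<rightarrow> W^*, m_i \<mapsto> mu_i.\<close>
definition flat :: "sect \<Rightarrow> sect" where
  "flat \<phi> p = \<phi> p"

definition dF_dot :: "(real \<times> real \<Rightarrow> real) \<Rightarrow> sect \<Rightarrow> sect" where
  "dF_dot F \<phi> p =
     (let c0 = fst (\<phi> p); c1 = snd (\<phi> p); r = fst p in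
      (r * d_rho F p * c0 + r * d_eta F p * c1,
       - r * d_rho F p * c1 + r * d_eta F p * c0))"

definition Phi :: "(real \<times> real \<Rightarrow> real) \<Rightarrow> sect \<Rightarrow> sect" where
  "Phi F \<phi> p = (1/2 * F p * fst (flat \<phi> p) + fst (dF_dot F \<phi> p),
                1/2 * F p * snd (flat \<phi> p) + snd (dF_dot F \<phi> p))"

definition joyce_solution :: "(real \<times> real) set \<Rightarrow> sect \<Rightarrow> bool" where
  "joyce_solution U \<Phi> \<longleftrightarrow>
     (\<forall>p\<in>U. (\<lambda>q. fst (\<Phi> q)) differentiable (at p) \<and> (\<lambda>q. snd (\<Phi> q)) differentiable (at p) \<and>
       d_rho (\<lambda>q. fst (\<Phi> q)) p + d_eta (\<lambda>q. snd (\<Phi> q)) p = fst (\<Phi> p) / fst p \<and>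
       d_eta (\<lambda>q. fst (\<Phi> q)) p - d_rho (\<lambda>q. snd (\<Phi> q)) p = 0)"

end

theory Submission
  imports Defs
begin

definition pd :: "(real \<times> real \<Rightarrow> real) \<Rightarrow> real \<Rightarrow> real \<Rightarrow> real \<times> real \<Rightarrow> bool" where
  "pd g A B p \<longleftrightarrow> (g has_derivative (\<lambda>h. fst h * A + snd h * B)) (at p)"

lemma pd_line_rho:
  assumes "pd G A B (x0 + t, y)"
  shows "((\<lambda>t. G (x0 + t, y)) has_real_derivative A) (at t)"
proof -
  have 1: "((\<lambda>t. (x0 + t, y)) has_derivative (\<lambda>h. (h, 0))) (at t)"
    by (auto intro!: derivative_eq_intros)
  have "((\<lambda>t. G (x0 + t, y)) has_derivative (\<lambda>h. fst (h,0::real) * A + snd (h,0::real) * B)) (at t)"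
    using has_derivative_compose[OF 1 assms[unfolded pd_def]] by simp
  then show ?thesis unfolding has_field_derivative_def
    by (rule has_derivative_eq_rhs) (auto simp: fun_eq_iff)
qed

lemma pd_line_eta:
  assumes "pd G A B (x, y0 + s)"
  shows "((\<lambda>s. G (x, y0 + s)) has_real_derivative B) (at s)"
proof -
  have 1: "((\<lambda>s. (x, y0 + s)) has_derivative (\<lambda>h. (0, h))) (at s)"
    by (auto intro!: derivative_eq_intros)
  have "((\<lambda>s. G (x, y0 + s)) has_derivative (\<lambda>h. fst (0::real,h) * A + snd (0::real,h) * B)) (at s)"
    using has_derivative_compose[OF 1 assms[unfolded pd_def]] by simp
  then show ?thesis unfolding has_field_derivative_def
    by (rule has_derivative_eq_rhs) (auto simp: fun_eq_iff)
qed

lemma pd_d_rho: assumes "pd G A B p" shows "d_rho G p = A"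
proof -
  have "pd G A B (0 + fst p, snd p)" using assms by simp
  from pd_line_rho[OF this] have "((\<lambda>t. G (t, snd p)) has_real_derivative A) (at (fst p))"
    by simp
  then show ?thesis unfolding d_rho_def by (rule DERIV_imp_deriv)
qed

lemma pd_d_eta: assumes "pd G A B p" shows "d_eta G p = B"
proof -
  have "pd G A B (fst p, 0 + snd p)" using assms by simp
  from pd_line_eta[OF this] have "((\<lambda>t. G (fst p, t)) has_real_derivative B) (at (snd p))"
    by simp
  then show ?thesis unfolding d_eta_def by (rule DERIV_imp_deriv)
qed

lemma pd_differentiable: "pd G A B p \<Longrightarrow> G differentiable (at p)"
  unfolding pd_def differentiable_def by blast

lemma pd_isCont: "pd G A B p \<Longrightarrow> isCont G p"
  unfolding pd_def by (rule has_derivative_continuous)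

lemma pd_cong: "pd f A B p \<Longrightarrow> A = A' \<Longrightarrow> B = B' \<Longrightarrow> pd f A' B' p" by simp

lemma pd_transform:
  assumes "pd f A B p" "open U" "p \<in> U" "\<And>q. q \<in> U \<Longrightarrow> f q = g q"
  shows "pd g A B p"
  using has_derivative_transform_within_open[OF assms(1)[unfolded pd_def] assms(2,3)] assms(4)
  unfolding pd_def by blast

lemma pd_const: "pd (\<lambda>q. c) 0 0 p"
  unfolding pd_def by (rule has_derivative_eq_rhs[OF has_derivative_const]) simp

lemma pd_fst: "pd (\<lambda>q. fst q) 1 0 p"
  unfolding pd_def by (rule has_derivative_eq_rhs[OF has_derivative_fst[OF has_derivative_ident]]) simp

lemma pd_snd: "pd (\<lambda>q. snd q) 0 1 p"
  unfolding pd_def by (rule has_derivative_eq_rhs[OF has_derivative_snd[OF has_derivative_ident]]) simp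

lemma pd_add: assumes "pd f A B p" "pd g C D p" shows "pd (\<lambda>q. f q + g q) (A + C) (B + D) p"
  unfolding pd_def
  by (rule has_derivative_eq_rhs[OF has_derivative_add[OF assms[unfolded pd_def]]]) (simp add: fun_eq_iff algebra_simps)

lemma pd_diff: assumes "pd f A B p" "pd g C D p" shows "pd (\<lambda>q. f q - g q) (A - C) (B - D) p"
  unfolding pd_def
  by (rule has_derivative_eq_rhs[OF has_derivative_diff[OF assms[unfolded pd_def]]]) (simp add: fun_eq_iff algebra_simps)

lemma pd_minus: assumes "pd f A B p" shows "pd (\<lambda>q. - f q) (- A) (- B) p"
  unfolding pd_def
  by (rule has_derivative_eq_rhs[OF has_derivative_minus[OF assms[unfolded pd_def]]]) (simp add: fun_eq_iff algebra_simps)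

lemma pd_mult: assumes "pd f A B p" "pd g C D p" shows
   "pd (\<lambda>q. f q * g q) (f p * C + A * g p) (f p * D + B * g p) p"
  unfolding pd_def
  by (rule has_derivative_eq_rhs[OF has_derivative_mult[OF assms[unfolded pd_def]]]) (simp add: fun_eq_iff algebra_simps)

lemma pd_comp:
  assumes "(h has_real_derivative h') (at (f p))" "pd f A B p"
  shows "pd (\<lambda>q. h (f q)) (h' * A) (h' * B) p"
proof -
  have "((\<lambda>q. h (f q)) has_derivative (\<lambda>x. h' * (fst x * A + snd x * B))) (at p)"
    using has_derivative_compose[of f _ p UNIV h "(*) h'"] assms unfolding has_field_derivative_def pd_def
    by simp
  moreover have "(\<lambda>x. h' * (fst x * A + snd x * B)) = (\<lambda>x. fst x * (h' * A) + snd x * (h' * B))"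
    by (simp add: fun_eq_iff algebra_simps)
  ultimately show ?thesis unfolding pd_def by simp
qed

lemma dist_shift_le: "dist (x0 + t, y0 + s) (x0, y0) \<le> \<bar>t\<bar> + \<bar>s::real\<bar>"
  by (simp add: dist_Pair_Pair dist_real_def sqrt_sum_squares_le_sum_abs)

lemma clairaut:
  assumes U: "open U" and pU: "p \<in> U"
    and F: "\<forall>q\<in>U. pd F (f1 q) (f2 q) q"
    and F1: "\<forall>q\<in>U. pd f1 (f11 q) (f12 q) q"
    and F2: "\<forall>q\<in>U. pd f2 (f21 q) (f22 q) q"
    and c12: "isCont f12 p" and c21: "isCont f21 p"
  shows "f12 p = f21 p"
proof (rule ccontr)
  assume ne: "f12 p \<noteq> f21 p"
  obtain x0 y0 where p: "p = (x0, y0)" by (cases p)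
  define e where "e = \<bar>f12 p - f21 p\<bar> / 2"
  have e: "e > 0" using ne by (simp add: e_def)
  obtain d1 where d1: "d1 > 0" "\<And>q. dist q p < d1 \<Longrightarrow> dist (f12 q) (f12 p) < e"
    using c12 e unfolding continuous_at_eps_delta by blast
  obtain d2 where d2: "d2 > 0" "\<And>q. dist q p < d2 \<Longrightarrow> dist (f21 q) (f21 p) < e"
    using c21 e unfolding continuous_at_eps_delta by blast
  obtain d0 where d0: "d0 > 0" "ball p d0 \<subseteq> U"
    using U pU open_contains_ball by blast
  define h where "h = min d0 (min d1 d2) / 3"
  have h: "h > 0" using d0 d1 d2 by (simp add: h_def)
  have near: "dist (x0 + t, y0 + s) p < min d0 (min d1 d2)" if "0 \<le> t" "t \<le> h" "0 \<le> s" "s \<le> h" for t s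
  proof -
    have "dist (x0 + t, y0 + s) p \<le> \<bar>t\<bar> + \<bar>s\<bar>" unfolding p by (rule dist_shift_le)
    also have "\<dots> \<le> 2 * h" using that by simp
    also have "\<dots> < min d0 (min d1 d2)" using h d0(1) d1(1) d2(1) unfolding h_def by linarith
    finally show ?thesis .
  qed
  have inU: "(x0 + t, y0 + s) \<in> U" if "0 \<le> t" "t \<le> h" "0 \<le> s" "s \<le> h" for t s
    using near[OF that] d0(2) by (auto simp: dist_commute subset_eq)
  define Delta where "Delta = F (x0 + h, y0 + h) - F (x0 + h, y0) - F (x0, y0 + h) + F (x0, y0)"
  have "\<exists>z. 0 < z \<and> z < h \<and>
     (F (x0 + h, y0 + h) - F (x0 + h, y0 + 0)) - (F (x0 + 0, y0 + h) - F (x0 + 0, y0 + 0))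
       = (h - 0) * (f1 (x0 + z, y0 + h) - f1 (x0 + z, y0 + 0))"
  proof (rule MVT2[OF h, where f="\<lambda>t. F (x0 + t, y0 + h) - F (x0 + t, y0 + 0)" and f'="\<lambda>t. f1 (x0 + t, y0 + h) - f1 (x0 + t, y0 + 0)"])
    fix t assume t: "0 \<le> t" "t \<le> h"
    show "((\<lambda>t. F (x0 + t, y0 + h) - F (x0 + t, y0 + 0)) has_real_derivative
           f1 (x0 + t, y0 + h) - f1 (x0 + t, y0 + 0)) (at t)"
      using t h F inU[of t h] inU[of t 0]
      by (intro DERIV_diff pd_line_rho) auto
  qed
  then obtain xi where xi: "0 < xi" "xi < h"
    "Delta = h * (f1 (x0 + xi, y0 + h) - f1 (x0 + xi, y0 + 0))"
    unfolding Delta_def by auto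
  have "\<exists>z. 0 < z \<and> z < h \<and> f1 (x0 + xi, y0 + h) - f1 (x0 + xi, y0 + 0) = (h - 0) * f12 (x0 + xi, y0 + z)"
  proof (rule MVT2[OF h, where f="\<lambda>s. f1 (x0 + xi, y0 + s)" and f'="\<lambda>s. f12 (x0 + xi, y0 + s)"])
    fix s assume s: "0 \<le> s" "s \<le> h"
    show "((\<lambda>s. f1 (x0 + xi, y0 + s)) has_real_derivative f12 (x0 + xi, y0 + s)) (at s)"
      using s xi F1 inU[of xi s] by (intro pd_line_eta) auto
  qed
  then obtain ze where ze: "0 < ze" "ze < h" "f1 (x0 + xi, y0 + h) - f1 (x0 + xi, y0 + 0) = h * f12 (x0 + xi, y0 + ze)"
    by auto
  have "\<exists>z. 0 < z \<and> z < h \<and>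
     (F (x0 + h, y0 + h) - F (x0 + 0, y0 + h)) - (F (x0 + h, y0 + 0) - F (x0 + 0, y0 + 0))
       = (h - 0) * (f2 (x0 + h, y0 + z) - f2 (x0 + 0, y0 + z))"
  proof (rule MVT2[OF h, where f="\<lambda>s. F (x0 + h, y0 + s) - F (x0 + 0, y0 + s)" and f'="\<lambda>s. f2 (x0 + h, y0 + s) - f2 (x0 + 0, y0 + s)"])
    fix s assume s: "0 \<le> s" "s \<le> h"
    show "((\<lambda>s. F (x0 + h, y0 + s) - F (x0 + 0, y0 + s)) has_real_derivative
           f2 (x0 + h, y0 + s) - f2 (x0 + 0, y0 + s)) (at s)"
      using s h F inU[of h s] inU[of 0 s]
      by (intro DERIV_diff pd_line_eta) auto
  qed
  then obtain ze' where ze': "0 < ze'" "ze' < h"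
    "Delta = h * (f2 (x0 + h, y0 + ze') - f2 (x0 + 0, y0 + ze'))"
    unfolding Delta_def by (auto simp: algebra_simps)
  have "\<exists>z. 0 < z \<and> z < h \<and> f2 (x0 + h, y0 + ze') - f2 (x0 + 0, y0 + ze') = (h - 0) * f21 (x0 + z, y0 + ze')"
  proof (rule MVT2[OF h, where f="\<lambda>t. f2 (x0 + t, y0 + ze')" and f'="\<lambda>t. f21 (x0 + t, y0 + ze')"])
    fix t assume t: "0 \<le> t" "t \<le> h"
    show "((\<lambda>t. f2 (x0 + t, y0 + ze')) has_real_derivative f21 (x0 + t, y0 + ze')) (at t)"
      using t ze' F2 inU[of t ze'] by (intro pd_line_rho) auto
  qed
  then obtain xi' where xi': "0 < xi'" "xi' < h" "f2 (x0 + h, y0 + ze') - f2 (x0 + 0, y0 + ze') = h * f21 (x0 + xi', y0 + ze')"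
    by auto
  have "h * (h * f12 (x0 + xi, y0 + ze)) = h * (h * f21 (x0 + xi', y0 + ze'))"
    using xi(3) ze(3) ze'(3) xi'(3) by (metis add_0_right)
  then have eq: "f12 (x0 + xi, y0 + ze) = f21 (x0 + xi', y0 + ze')" using h by simp
  have a1: "dist (f12 (x0 + xi, y0 + ze)) (f12 p) < e"
    using d1(2) near[of xi ze] xi ze by auto
  have a2: "dist (f21 (x0 + xi', y0 + ze')) (f21 p) < e"
    using d2(2) near[of xi' ze'] xi' ze' by auto
  have "\<bar>f12 p - f21 p\<bar> < 2 * e" using a1 a2 eq unfolding dist_real_def by linarith
  then show False unfolding e_def by simp
qed

lemma deriv_inv_sqrt: "r > 0 \<Longrightarrow> ((\<lambda>x. inverse (sqrt x)) has_real_derivative (- inverse (sqrt r) / (2 * r))) (at r)"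
proof -
  assume r: "r > 0"
  have "((\<lambda>x. inverse (sqrt x)) has_real_derivative (-((inverse (sqrt r)/2) * inverse (sqrt r ^ Suc (Suc 0))))) (at r)"
    by (rule DERIV_inverse_fun[OF DERIV_real_sqrt]) (use r in simp_all)
  then show ?thesis by (rule DERIV_cong) (use r in \<open>simp add: field_simps\<close>)
qed

lemma pd_c0:
  assumes r: "fst p > 0"
  shows "pd (\<lambda>q. - (a * snd q - b) / sqrt (fst q))
           (- (- (a * snd p - b) / sqrt (fst p)) / (2 * fst p)) (- (a * sqrt (fst p)) / fst p) p"
proof -
  have e: "(\<lambda>q. - (a * snd q - b) / sqrt (fst q)) = (\<lambda>q. (- (a * snd q - b)) * inverse (sqrt (fst q)))"
    by (simp add: divide_inverse)
  show ?thesis unfolding e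
    apply (rule pd_cong)
      apply (rule pd_mult pd_minus pd_diff pd_const pd_snd pd_comp[where f=fst, OF deriv_inv_sqrt[OF r]] pd_fst)+
    using r by (simp_all add: field_simps real_sqrt_mult_self)
qed

lemma pd_c1:
  assumes r: "fst p > 0"
  shows "pd (\<lambda>q. a * sqrt (fst q)) ((a * sqrt (fst p)) / (2 * fst p)) 0 p"
  apply (rule pd_cong)
    apply (rule pd_mult pd_const pd_comp[where f=fst, OF DERIV_real_sqrt[OF r]] pd_fst)+
  using r by (simp_all add: field_simps)


theorem proposition7p1:
  fixes F :: "real \<times> real \<Rightarrow> real" and U :: "(real \<times> real) set" and a b :: real
  assumes "open U" and "U \<subseteq> half_plane"
    and "smooth_on2 U F"
    and "\<forall>p\<in>U. d_rho (d_rho F) p + d_eta (d_eta F) p = 3 * F p / (4 * (fst p)\<^sup>2)"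
  shows "joyce_solution U (Phi F (twistor a b))"
proof -
  note U = assms(1)
  obtain f1 f2 where dF: "\<forall>q\<in>U. pd F (f1 q) (f2 q) q" and s1: "smooth_on2 U f1" and s2: "smooth_on2 U f2"
    using assms(3) unfolding pd_def by (cases rule: smooth_on2.cases) blast
  obtain f11 f12 where d1: "\<forall>q\<in>U. pd f1 (f11 q) (f12 q) q" and s12: "smooth_on2 U f12"
    using s1 unfolding pd_def by (cases rule: smooth_on2.cases) blast
  obtain f21 f22 where d2: "\<forall>q\<in>U. pd f2 (f21 q) (f22 q) q" and s21: "smooth_on2 U f21"
    using s2 unfolding pd_def by (cases rule: smooth_on2.cases) blast
  have c12: "isCont f12 q" if "q \<in> U" for q
    using s12 that unfolding pd_def by (cases rule: smooth_on2.cases) (blast intro: has_derivative_continuous)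
  have c21: "isCont f21 q" if "q \<in> U" for q
    using s21 that unfolding pd_def by (cases rule: smooth_on2.cases) (blast intro: has_derivative_continuous)
  have drF: "d_rho F q = f1 q" and deF: "d_eta F q = f2 q" if "q \<in> U" for q
    using dF that pd_d_rho pd_d_eta by blast+
  define c0 where "c0 = (\<lambda>q::real\<times>real. - (a * snd q - b) / sqrt (fst q))"
  define c1 where "c1 = (\<lambda>q::real\<times>real. a * sqrt (fst q))"
  define A0 where "A0 = (\<lambda>q. 1/2 * F q * c0 q + (fst q * f1 q * c0 q + fst q * f2 q * c1 q))"
  define A1 where "A1 = (\<lambda>q. 1/2 * F q * c1 q + (- fst q * f1 q * c1 q + fst q * f2 q * c0 q))"
  have eq0: "fst (Phi F (twistor a b) q) = A0 q" and eq1: "snd (Phi F (twistor a b) q) = A1 q"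
    if "q \<in> U" for q
    using that by (simp_all add: Phi_def flat_def dF_dot_def twistor_def A0_def A1_def c0_def c1_def drF deF Let_def)
  show ?thesis unfolding joyce_solution_def
  proof (intro ballI conjI)
    fix p assume pU: "p \<in> U"
    define r where "r = fst p"
    have r: "r > 0" using pU assms(2) by (auto simp: half_plane_def r_def)
    have P0: "pd F (f1 p) (f2 p) p" and P1: "pd f1 (f11 p) (f12 p) p" and P2: "pd f2 (f21 p) (f22 p) p"
      using dF d1 d2 pU by auto
    have C0: "pd c0 (- c0 p / (2 * r)) (- c1 p / r) p"
      using pd_c0[of p a b] r unfolding c0_def c1_def r_def by simp
    have C1: "pd c1 (c1 p / (2 * r)) 0 p"
      using pd_c1[of p a] r unfolding c1_def r_def by simp
    have sym: "f12 p = f21 p"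
      by (rule clairaut[OF U pU dF d1 d2 c12[OF pU] c21[OF pU]])
    have rr: "d_rho (d_rho F) p = f11 p"
      by (rule pd_d_rho, rule pd_transform[OF P1 U pU]) (simp add: drF)
    have ee: "d_eta (d_eta F) p = f22 p"
      by (rule pd_d_eta, rule pd_transform[OF P2 U pU]) (simp add: deF)
    have lap: "f22 p = 3 * F p / (4 * r\<^sup>2) - f11 p"
      using assms(4) pU rr ee unfolding r_def by force
    have "pd A0
       (1/2 * (f1 p * c0 p + F p * (- c0 p / (2 * r))) + (f1 p + r * f11 p) * c0 p + r * f1 p * (- c0 p / (2 * r))
          + (f2 p + r * f21 p) * c1 p + r * f2 p * (c1 p / (2 * r)))
       (1/2 * (f2 p * c0 p + F p * (- c1 p / r)) + r * f12 p * c0 p + r * f1 p * (- c1 p / r)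
          + r * f22 p * c1 p) p"
      unfolding A0_def
      apply (rule pd_cong)
        apply (rule pd_add pd_mult pd_const pd_fst P0 P1 P2 C0 C1)+
      by (simp_all add: r_def algebra_simps)
    moreover have "pd A1
       (1/2 * (f1 p * c1 p + F p * (c1 p / (2 * r))) - (f1 p + r * f11 p) * c1 p - r * f1 p * (c1 p / (2 * r))
          + (f2 p + r * f21 p) * c0 p + r * f2 p * (- c0 p / (2 * r)))
       (1/2 * (f2 p * c1 p) - r * f12 p * c1 p + r * f22 p * c0 p + r * f2 p * (- c1 p / r)) p"
      unfolding A1_def
      apply (rule pd_cong)
        apply (rule pd_add pd_mult pd_minus pd_const pd_fst P0 P1 P2 C0 C1)+
      by (simp_all add: r_def algebra_simps)
    ultimately have Q0: "pd (\<lambda>q. fst (Phi F (twistor a b) q)) 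
       (1/2 * (f1 p * c0 p + F p * (- c0 p / (2 * r))) + (f1 p + r * f11 p) * c0 p + r * f1 p * (- c0 p / (2 * r))
          + (f2 p + r * f21 p) * c1 p + r * f2 p * (c1 p / (2 * r)))
       (1/2 * (f2 p * c0 p + F p * (- c1 p / r)) + r * f12 p * c0 p + r * f1 p * (- c1 p / r)
          + r * f22 p * c1 p) p"
      and Q1: "pd (\<lambda>q. snd (Phi F (twistor a b) q))
       (1/2 * (f1 p * c1 p + F p * (c1 p / (2 * r))) - (f1 p + r * f11 p) * c1 p - r * f1 p * (c1 p / (2 * r))
          + (f2 p + r * f21 p) * c0 p + r * f2 p * (- c0 p / (2 * r)))
       (1/2 * (f2 p * c1 p) - r * f12 p * c1 p + r * f22 p * c0 p + r * f2 p * (- c1 p / r)) p"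
      using pd_transform[OF _ U pU] eq0 eq1 by (metis (no_types, lifting))+
    show "(\<lambda>q. fst (Phi F (twistor a b) q)) differentiable at p" using Q0 by (rule pd_differentiable)
    show "(\<lambda>q. snd (Phi F (twistor a b) q)) differentiable at p" using Q1 by (rule pd_differentiable)
    have ph0: "fst (Phi F (twistor a b) p) = A0 p" using eq0 pU by simp
    show "d_rho (\<lambda>q. fst (Phi F (twistor a b) q)) p + d_eta (\<lambda>q. snd (Phi F (twistor a b) q)) p =
          fst (Phi F (twistor a b) p) / fst p"
      unfolding pd_d_rho[OF Q0] pd_d_eta[OF Q1] ph0 r_def[symmetric] A0_def lap sym
      using r by (simp add: field_simps power2_eq_square)
    show "d_eta (\<lambda>q. fst (Phi F (twistor a b) q)) p - d_rho (\<lambda>q. snd (Phi F (twistor a b) q)) p = 0"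
      unfolding pd_d_eta[OF Q0] pd_d_rho[OF Q1] lap sym
      using r by (simp add: field_simps power2_eq_square)
  qed
qed

end
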